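(* Let $k\ge4$ be an integer, $\eta\in[\eta_{k+1},\eta_k)$, and $j\ge k$ an integer. Then $\Theta_j(\eta)>0$, where $\Theta_j(\eta)=(1-|a|^4)\sin\eta+|a|^{j+1}\sin(j\eta)$.
   Context: For $\eta\in(0,\pi/3)$ let $|a|=\frac{1}{2\cos\eta}$. For integers $k\ge1$ let $\Phi_k(\eta)=(1-|a|^4)\sin((k-1)\eta)-|a|^3\sin((k-2)\eta)+|a|^k\sin\eta$. For each integer $k\ge4$, $\Phi_k$ has a unique zero in $(\pi/k,\pi/(k-1))$, denoted $\eta_k$. *)

theory Defs
  imports Complex_Main
begin

definition absa :: "real \<Rightarrow> real" where
  "absa \<eta> = 1 / (2 * cos \<eta>)"

definition Phi :: "nat \<Rightarrow> real \<Rightarrow> real" where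
  "Phi k \<eta> = (1 - absa \<eta> ^ 4) * sin ((real k - 1) * \<eta>)
     - absa \<eta> ^ 3 * sin ((real k - 2) * \<eta>) + absa \<eta> ^ k * sin \<eta>"

definition eta :: "nat \<Rightarrow> real" where
  "eta k = (THE x. pi / real k < x \<and> x < pi / (real k - 1) \<and> Phi k x = 0)"

definition Theta :: "nat \<Rightarrow> real \<Rightarrow> real" where
  "Theta j \<eta> = (1 - absa \<eta> ^ 4) * sin \<eta> + absa \<eta> ^ (j + 1) * sin (real j * \<eta>)"

end

theory Submission
  imports Defs "HOL-Analysis.Complex_Transcendental"
begin

lemma sin_lower: fixes x :: real assumes "0 \<le> x" shows "x - x^3/6 \<le> sin x"
proof -
  have "\<bar>sin x - x\<bar> \<le> x^3/6"
    using Maclaurin_sin_bound[of x 3] assms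
    by (simp add: sin_coeff_def numeral_3_eq_3 lessThan_Suc field_simps)
  then show ?thesis by linarith
qed

lemma cos_lower: "1 - x^2/2 \<le> cos (x::real)"
proof -
  have "cos x = cos (2*(x/2))" by simp
  also have "\<dots> = 1 - 2 * sin (x/2)^2" by (rule cos_double_sin)
  finally have e: "cos x = 1 - 2 * sin (x/2)^2" .
  have "\<bar>sin (x/2)\<bar> \<le> \<bar>x/2\<bar>" by (rule abs_sin_x_le_abs_x)
  then have "sin (x/2)^2 \<le> (x/2)^2"
    by (metis abs_le_square_iff)
  then show ?thesis using e by (simp add: power_divide)
qed

lemma cos_sq_ge: assumes "0 \<le> x" "x \<le> pi/4" shows "cos x ^ 2 \<ge> 1/2" "cos x > 0"
proof -
  have "cos (pi/4) \<le> cos x" using assms by (intro cos_monotone_0_pi_le) auto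
  then have c: "sqrt 2 / 2 \<le> cos x" by (simp add: cos_45)
  have "(sqrt 2 / 2)^2 \<le> cos x ^2"
    using c by (intro power_mono) auto
  then show "cos x ^ 2 \<ge> 1/2" by (simp add: power_divide)
  have "sqrt 2 / 2 > (0::real)" by simp
  then show "cos x > 0" using c by linarith
qed

lemma absa_bounds: assumes "0 \<le> x" "x \<le> pi/4"
  shows "absa x > 0" "absa x ^ 2 \<le> 1/2" "absa x \<le> 71/100" "absa x ^ 4 \<le> 1/4"
    "absa x \<ge> 1/2"
proof -
  note c = cos_sq_ge[OF assms]
  show p: "absa x > 0" using c by (simp add: absa_def)
  have "absa x ^ 2 = 1 / (4 * cos x ^ 2)" by (simp add: absa_def power2_eq_square)
  also have "\<dots> \<le> 1/2" using c by (simp add: field_simps)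
  finally show a2: "absa x ^ 2 \<le> 1/2" .
  show "absa x \<le> 71/100"
  proof (rule ccontr)
    assume "\<not> ?thesis"
    then have "(71/100)^2 < absa x ^ 2" by (intro power_strict_mono) auto
    moreover have "(71/100::real)^2 = 5041/10000" by (simp add: power2_eq_square)
    ultimately show False using a2 by linarith
  qed
  have "absa x ^ 4 = (absa x ^ 2)^2" by simp
  also have "\<dots> \<le> (1/2)^2" using a2 by (intro power_mono) auto
  finally show "absa x ^ 4 \<le> 1/4" by (simp add: power2_eq_square)
  have "1/(2*1) \<le> 1/(2*cos x)" using c(2) by (intro divide_left_mono mult_left_mono mult_pos_pos) auto
  then show "absa x \<ge> 1/2" by (simp add: absa_def)
qed


lemma DERIV_absa: assumes "cos x \<noteq> 0"
  shows "(absa has_real_derivative 2 * absa x ^ 2 * sin x) (at x)"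
proof -
  have "((\<lambda>x. 1 / (2 * cos x)) has_real_derivative 2 * absa x ^ 2 * sin x) (at x)"
    apply (rule derivative_eq_intros refl | simp add: assms)+
    using assms by (simp add: absa_def power2_eq_square field_simps)
  then show ?thesis by (simp add: absa_def[abs_def])
qed

definition Phid :: "nat \<Rightarrow> real \<Rightarrow> real" where
  "Phid k x = - 8 * absa x ^ 5 * sin x * sin ((real k - 1) * x)
     + (1 - absa x ^ 4) * (real k - 1) * cos ((real k - 1) * x)
     - 6 * absa x ^ 4 * sin x * sin ((real k - 2) * x)
     - (real k - 2) * absa x ^ 3 * cos ((real k - 2) * x)
     + 2 * real k * absa x ^ (k + 1) * sin x ^ 2 + absa x ^ k * cos x"

lemma DERIV_Phi: assumes "cos x \<noteq> 0" "k \<ge> 1"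
  shows "(Phi k has_real_derivative Phid k x) (at x)"
proof -
  note dA = DERIV_absa[OF assms(1)]
  obtain m where k: "k = Suc m" using assms(2) by (cases k) auto
  have "((\<lambda>x. (1 - absa x ^ 4) * sin ((real k - 1) * x) - absa x ^ 3 * sin ((real k - 2) * x)
       + absa x ^ k * sin x) has_real_derivative Phid k x) (at x)"
    apply (rule derivative_eq_intros dA refl)+
    unfolding Phid_def k
    apply (simp add: power_Suc)
    apply (simp add: algebra_simps power2_eq_square)
    apply (simp add: eval_nat_numeral algebra_simps)
    done
  then show ?thesis by (simp add: Phi_def[abs_def])
qed

lemma Phid_neg: assumes k: "k \<ge> 5" and x1: "pi / real k \<le> x" and x2: "x \<le> pi / (real k - 1)"
  shows "Phid k x < 0"
proof -
  have k1: "real k - 1 \<ge> 4" using k by simp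
  have xpos: "x > 0" using x1 k by (smt (verit) divide_pos_pos of_nat_0_less_iff pi_gt_zero gr0I not_numeral_le_zero)
  have "pi / (real k - 1) \<le> pi / 4" using k1 by (intro divide_left_mono) auto
  then have x4: "x \<le> pi/4" using x2 by linarith
  note AB = absa_bounds[OF less_imp_le[OF xpos] x4]
  define A where "A = absa x"
  have A0: "A > 0" "A^2 \<le> 1/2" "A \<le> 71/100" "A^4 \<le> 1/4" using AB by (auto simp: A_def)
  have A1: "A \<le> 1" using A0 by simp
  have A3: "A^3 \<le> 355/1000"
  proof -
    have "A^3 = A * A^2" by (simp add: power2_eq_square power3_eq_cube)
    also have "\<dots> \<le> (71/100) * (1/2)" using A0 by (intro mult_mono) auto
    finally show ?thesis by simp
  qed
  have Ak: "A^k \<le> 1/4"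
  proof -
    have "A^k \<le> A^4" using A0 A1 k by (intro power_decreasing) auto
    then show ?thesis using A0 by linarith
  qed
  have Ak1: "A^(k+1) \<le> 1/8"
  proof -
    have "A^(k+1) \<le> A^6" using A0 A1 k by (intro power_decreasing) auto
    also have "A^6 = (A^2)^3" by (simp add: power_mult[symmetric])
    also have "\<dots> \<le> (1/2)^3" using A0 by (intro power_mono) auto
    also have "(1/2::real)^3 = 1/8" by (simp add: power3_eq_cube)
    finally show ?thesis .
  qed
  note cs = cos_sq_ge[OF less_imp_le[OF xpos] x4]
  have s0: "sin x \<ge> 0" using xpos x4 by (intro sin_ge_zero) auto
  have s2: "sin x ^ 2 \<le> 1/2" using cs sin_cos_squared_add[of x] by linarith
  have kx: "(real k - 1) * x \<le> pi" using x2 k1 by (simp add: field_simps)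
  have S1: "sin ((real k - 1) * x) \<ge> 0" using kx xpos k1 by (intro sin_ge_zero) auto
  have S2: "sin ((real k - 2) * x) \<ge> 0"
  proof (rule sin_ge_zero)
    show "0 \<le> (real k - 2) * x" using xpos k1 by auto
    have "(real k - 2) * x \<le> (real k - 1) * x" using xpos by (intro mult_right_mono) auto
    then show "(real k - 2) * x \<le> pi" using kx by linarith
  qed
  define y where "y = pi - (real k - 1) * x"
  have y0: "0 \<le> y" using kx by (simp add: y_def)
  have "(real k - 1) * (pi / real k) \<le> (real k - 1) * x" using x1 k1 by (intro mult_left_mono) auto
  then have "y \<le> pi - (real k - 1) * (pi / real k)" by (simp add: y_def)
  also have "\<dots> = pi / real k" using k by (simp add: field_simps)
  also have "\<dots> \<le> pi / 5" using k by (intro divide_left_mono) auto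
  also have "\<dots> \<le> 4/5" using pi_less_4 by simp
  finally have y1: "y \<le> 4/5" .
  have "y^2 \<le> (4/5)^2" using y0 y1 by (intro power_mono) auto
  then have "cos y \<ge> 1 - (4/5)^2/2" using cos_lower[of y] by linarith
  moreover have "cos ((real k - 1) * x) = - cos y" by (simp add: y_def)
  ultimately have C1: "cos ((real k - 1) * x) \<le> -68/100" by (simp add: power2_eq_square)
  have T1: "8 * A ^ 5 * sin x * sin ((real k - 1) * x) \<ge> 0"
    using A0 s0 S1 by (simp add: mult_nonneg_nonneg)
  have T3: "6 * A ^ 4 * sin x * sin ((real k - 2) * x) \<ge> 0"
    using A0 s0 S2 by (simp add: mult_nonneg_nonneg)
  have T2: "(1 - A ^ 4) * (real k - 1) * cos ((real k - 1) * x) \<le> (3/4) * (real k - 1) * (-68/100)"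
  proof -
    have m: "(3/4) * (real k - 1) \<le> (1 - A ^ 4) * (real k - 1)" using A0 k1 by (intro mult_right_mono) auto
    have "(1 - A ^ 4) * (real k - 1) * cos ((real k - 1) * x) \<le> (3/4) * (real k - 1) * cos ((real k - 1) * x)"
      using mult_right_mono_neg[OF m, of "cos ((real k - 1) * x)"] C1 by linarith
    also have "\<dots> \<le> (3/4) * (real k - 1) * (-68/100)" using C1 k1 by (intro mult_left_mono) auto
    finally show ?thesis .
  qed
  have T4: "- ((real k - 2) * A ^ 3 * cos ((real k - 2) * x)) \<le> (real k - 2) * (355/1000)"
  proof -
    have "- ((real k - 2) * A ^ 3 * cos ((real k - 2) * x)) = ((real k - 2) * A ^ 3) * (- cos ((real k - 2) * x))" by (simp add: algebra_simps)
    also have "\<dots> \<le> ((real k - 2) * A ^ 3) * 1"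
      using A0 k1 by (intro mult_left_mono) auto
    also have "\<dots> \<le> ((real k - 2) * (355/1000)) * 1"
      using A3 k1 by (intro mult_right_mono mult_left_mono) auto
    finally show ?thesis by simp
  qed
  have T5: "2 * real k * A ^ (k + 1) * sin x ^ 2 \<le> 2 * real k * (1/8) * (1/2)"
    using Ak1 s2 A0 by (intro mult_mono) auto
  have T6: "A ^ k * cos x \<le> 1/4 * 1"
    using Ak A0 cs by (intro mult_mono) auto
  define p1 where "p1 = 8 * A ^ 5 * sin x * sin ((real k - 1) * x)"
  define p2 where "p2 = (1 - A ^ 4) * (real k - 1) * cos ((real k - 1) * x)"
  define p3 where "p3 = 6 * A ^ 4 * sin x * sin ((real k - 2) * x)"
  define p4 where "p4 = (real k - 2) * A ^ 3 * cos ((real k - 2) * x)"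
  define p5 where "p5 = 2 * real k * A ^ (k + 1) * sin x ^ 2"
  define p6 where "p6 = A ^ k * cos x"
  have e: "Phid k x = - p1 + p2 - p3 - p4 + p5 + p6"
    by (simp add: Phid_def A_def p1_def p2_def p3_def p4_def p5_def p6_def)
  have "p1 \<ge> 0" "p2 \<le> 3 / 4 * (real k - 1) * (- 68 / 100)" "p3 \<ge> 0"
    "- p4 \<le> (real k - 2) * (355 / 1000)" "p5 \<le> 2 * real k * (1 / 8) * (1 / 2)" "p6 \<le> 1/4*1"
    using T1 T2 T3 T4 T5 T6 by (simp_all only: p1_def p2_def p3_def p4_def p5_def p6_def)
  then show ?thesis unfolding e using k1 by (simp add: field_simps)
qed

lemma absa_cos: "cos x \<noteq> 0 \<Longrightarrow> absa x * cos x = 1/2"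
  by (simp add: absa_def)

lemma Phi_left: assumes k: "k \<ge> 4" shows "Phi k (pi / real k) > 0"
proof -
  define x where "x = pi / real k"
  have xpos: "x > 0" using k by (simp add: x_def)
  have x4: "x \<le> pi/4" unfolding x_def using k by (intro divide_left_mono) auto
  note AB = absa_bounds[OF less_imp_le[OF xpos] x4]
  note cs = cos_sq_ge[OF less_imp_le[OF xpos] x4]
  define A where "A = absa x"
  have e1: "(real k - 1) * x = pi - x" using k by (simp add: x_def field_simps)
  have e2: "(real k - 2) * x = pi - 2 * x" using k by (simp add: x_def field_simps)
  have Ac: "A * cos x = 1/2" using cs by (simp add: A_def absa_cos)
  have "Phi k x = (1 - A^4) * sin x - A^3 * (2 * sin x * cos x) + A^k * sin x"
    by (simp add: Phi_def e1 e2 A_def sin_double)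
  also have "A^3 * (2 * sin x * cos x) = A^2 * sin x * (2 * (A * cos x))"
    by (simp add: power2_eq_square power3_eq_cube algebra_simps)
  also have "\<dots> = A^2 * sin x" using Ac by simp
  finally have e: "Phi k x = sin x * (1 - A^4 - A^2 + A^k)" by (simp add: algebra_simps)
  have s: "sin x > 0" using xpos x4 by (intro sin_gt_zero) auto
  have "A^k \<ge> 0" using AB by (simp add: A_def)
  then have "1 - A^4 - A^2 + A^k > 0" using AB unfolding A_def by linarith
  then show ?thesis using e s by (simp add: x_def)
qed

lemma Phi_right: assumes k: "k \<ge> 5" shows "Phi k (pi / (real k - 1)) < 0"
proof -
  define x where "x = pi / (real k - 1)"
  have k1: "real k - 1 \<ge> 4" using k by simp
  have xpos: "x > 0" using k1 by (simp add: x_def)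
  have x4: "x \<le> pi/4" unfolding x_def using k1 by (intro divide_left_mono) auto
  note AB = absa_bounds[OF less_imp_le[OF xpos] x4]
  define A where "A = absa x"
  have e1: "(real k - 1) * x = pi" using k1 by (simp add: x_def field_simps)
  have e2: "(real k - 2) * x = pi - x" using k1 by (simp add: x_def field_simps)
  have "Phi k x = sin x * (A^k - A^3)"
    unfolding Phi_def e1 e2 A_def by (simp add: algebra_simps)
  moreover have "A^k < A^3" using AB k by (intro power_strict_decreasing) (auto simp: A_def)
  moreover have "sin x > 0" using xpos x4 by (intro sin_gt_zero) auto
  ultimately show ?thesis by (simp add: x_def mult_pos_neg)
qed

lemma cont_Phi: assumes "0 \<le> a" "b < pi/2" "k \<ge> 1" shows "continuous_on {a..b} (Phi k)"
proof (rule continuous_at_imp_continuous_on, intro ballI)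
  fix x assume "x \<in> {a..b}"
  then have "cos x > 0" using assms by (intro cos_gt_zero_pi) auto
  then show "isCont (Phi k) x" using DERIV_Phi[of x k] assms by (intro DERIV_isCont) auto
qed

lemma eta_ge5: assumes k: "k \<ge> 5"
  shows "pi / real k < eta k \<and> eta k < pi / (real k - 1) \<and> Phi k (eta k) = 0"
proof -
  define a where "a = pi / real k"
  define b where "b = pi / (real k - 1)"
  have k1: "real k - 1 \<ge> 4" using k by simp
  have ab: "a < b" unfolding a_def b_def using k1 by (intro divide_strict_left_mono) auto
  have a0: "0 \<le> a" by (simp add: a_def)
  have b4: "b \<le> pi/4" unfolding b_def using k1 by (intro divide_left_mono) auto
  have b2: "b < pi/2" using b4 pi_gt_zero by linarith
  have pa: "Phi k a > 0" using Phi_left[of k] k by (simp add: a_def)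
  have pb: "Phi k b < 0" using Phi_right[OF k] by (simp add: b_def)
  obtain x where x: "a \<le> x" "x \<le> b" "Phi k x = 0"
    using IVT2'[of "Phi k" b 0 a, OF _ _ _ cont_Phi[OF a0 b2, of k]] pa pb ab k by auto
  have xa: "a < x" using x pa by (cases "x = a") auto
  have xb: "x < b" using x pb by (cases "x = b") auto
  have dec: "Phi k u > Phi k v" if "a \<le> u" "u < v" "v \<le> b" for u v
  proof (rule DERIV_neg_imp_decreasing[OF that(2)])
    fix z assume z: "u \<le> z" "z \<le> v"
    have "cos z > 0" using z that a0 b2 by (intro cos_gt_zero_pi) auto
    then show "\<exists>y. DERIV (Phi k) z :> y \<and> y < 0"
      using DERIV_Phi[of z k] Phid_neg[OF k, of z] z that k by (auto simp: a_def b_def)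
  qed
  have uniq: "\<exists>!x. pi / real k < x \<and> x < pi / (real k - 1) \<and> Phi k x = 0"
  proof (rule ex1I[of _ x])
    show "pi / real k < x \<and> x < pi / (real k - 1) \<and> Phi k x = 0" using xa xb x by (simp add: a_def b_def)
  next
    fix y assume y: "pi / real k < y \<and> y < pi / (real k - 1) \<and> Phi k y = 0"
    show "y = x"
    proof (rule ccontr)
      assume "y \<noteq> x"
      then have "y < x \<or> x < y" by linarith
      then show False using dec[of y x] dec[of x y] y xa xb x by (auto simp: a_def b_def)
    qed
  qed
  show ?thesis using theI'[OF uniq] unfolding eta_def .
qed

lemma sin_three: "sin (3 * x) = sin x * (4 * cos x ^ 2 - 1)" for x :: real
proof -
  have "sin (3 * x) = sin (2 * x + x)" by simp
  also have "\<dots> = 2 * sin x * cos x * cos x + (cos x ^ 2 - sin x ^ 2) * sin x"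
    by (simp only: sin_add sin_double cos_double)
  also have "\<dots> = sin x * (4 * cos x ^ 2 - 1)"
    using sin_cos_squared_add[of x] by algebra
  finally show ?thesis .
qed

lemma Phi4_formula: assumes "cos x \<noteq> 0"
  shows "absa x ^ 2 * Phi 4 x = sin x * (1 - absa x ^ 2) * (1 - 2 * absa x ^ 4)"
proof -
  define A where "A = absa x"
  define c where "c = cos x"
  define s where "s = sin x"
  have h: "2 * A * c = 1" using assms by (simp add: A_def c_def absa_def)
  have "Phi 4 x = (1 - A^4) * (s * (4 * c^2 - 1)) - A^3 * (2 * s * c) + A^4 * s"
    by (simp add: Phi_def A_def c_def s_def sin_three sin_double)
  then have "A^2 * Phi 4 x = A^2 * ((1 - A^4) * (s * (4 * c^2 - 1)) - A^3 * (2 * s * c) + A^4 * s)" by simp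
  also have "\<dots> = s * (1 - A^2) * (1 - 2 * A^4)" using h by algebra
  finally show ?thesis by (simp add: A_def s_def)
qed

lemma absa_strict_mono: assumes "0 \<le> x" "x < y" "y < pi/2" shows "absa x < absa y"
proof -
  have cy: "cos y > 0" using assms by (intro cos_gt_zero_pi) auto
  have "cos y < cos x" using assms by (intro cos_monotone_0_pi) auto
  then show ?thesis using cy by (simp add: absa_def divide_strict_left_mono)
qed

lemma eta4: "pi / 4 < eta 4 \<and> eta 4 < pi / 3 \<and> absa (eta 4) ^ 4 = 1/2"
proof -
  define P where "P = (\<lambda>x. pi / real 4 < x \<and> x < pi / (real 4 - 1) \<and> Phi 4 x = 0)"
  have Pchar: "P x \<longleftrightarrow> pi / 4 < x \<and> x < pi / 3 \<and> absa x ^ 4 = 1/2" for x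
  proof -
    have "pi / 4 < x \<and> x < pi / 3 \<Longrightarrow> Phi 4 x = 0 \<longleftrightarrow> absa x ^ 4 = 1/2"
    proof -
      assume x: "pi / 4 < x \<and> x < pi / 3"
      have c0: "cos x > 0" using x by (intro cos_gt_zero_pi) auto
      have "cos x > cos (pi/3)" using x by (intro cos_monotone_0_pi) auto
      then have c1: "cos x > 1/2" by (simp add: cos_60)
      have A1: "absa x < 1" using c1 by (simp add: absa_def)
      have A0: "absa x > 0" using c0 by (simp add: absa_def)
      have "absa x ^ 2 < 1" using A1 A0 by (simp add: power_less_one_iff)
      have s0: "sin x > 0" using x by (intro sin_gt_zero) auto
      note F = Phi4_formula[of x]
      have "Phi 4 x = 0 \<longleftrightarrow> absa x ^ 2 * Phi 4 x = 0" using A0 by simp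
      also have "\<dots> \<longleftrightarrow> 1 - 2 * absa x ^ 4 = 0" using F c0 s0 \<open>absa x ^ 2 < 1\<close> by simp
      also have "\<dots> \<longleftrightarrow> absa x ^ 4 = 1/2" by auto
      finally show ?thesis .
    qed
    then show ?thesis by (auto simp: P_def)
  qed
  have cont: "continuous_on {pi/4..pi/3} (\<lambda>x. absa x ^ 4)"
  proof (rule continuous_at_imp_continuous_on, intro ballI)
    fix x assume "x \<in> {pi/4..pi/3}"
    then have xx: "pi/4 \<le> x" "x \<le> pi/3" by auto
    have "cos x > 0" by (rule cos_gt_zero_pi) (use xx pi_gt_zero in linarith)+
    then have "isCont absa x" using DERIV_absa[of x] by (intro DERIV_isCont) auto
    then show "isCont (\<lambda>x. absa x ^ 4) x" by (intro continuous_intros)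
  qed
  have g1: "absa (pi/4) ^ 4 = 1/4"
  proof -
    have "absa (pi/4) = 1 / sqrt 2" by (simp add: absa_def cos_45)
    moreover have "sqrt 2 ^ 4 = (sqrt 2 ^ 2) ^ 2" by (simp only: power_mult[symmetric]) simp
    moreover have "(sqrt 2 ^ 2) ^ 2 = (4::real)" by simp
    ultimately show ?thesis by (simp add: power_divide)
  qed
  have g2: "absa (pi/3) ^ 4 = 1" by (simp add: absa_def cos_60)
  obtain x where x: "pi/4 \<le> x" "x \<le> pi/3" "absa x ^ 4 = 1/2"
    using IVT'[of "\<lambda>x. absa x ^ 4" "pi/4" "1/2" "pi/3", OF _ _ _ cont] g1 g2 by auto
  have xa: "pi/4 < x" using x g1 by (cases "x = pi/4") auto
  have xb: "x < pi/3" using x g2 by (cases "x = pi/3") auto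
  have xP: "P x" unfolding Pchar using xa xb x by auto
  have uniq: "\<exists>!x. P x"
  proof (rule ex1I[of _ x])
    show "P x" by (rule xP)
  next
    fix y assume "P y"
    then have y: "pi / 4 < y" "y < pi / 3" "absa y ^ 4 = 1/2" unfolding Pchar by auto
    show "y = x"
    proof (rule ccontr)
      assume "y \<noteq> x"
      have p: "0 \<le> x" "0 \<le> y" "x < pi/2" "y < pi/2" using xa xb y pi_gt_zero by linarith+
      have cx: "cos x > 0" "cos y > 0" using p by (intro cos_gt_zero_pi; linarith)+
      have Ap: "absa x > 0" "absa y > 0" using cx by (simp_all add: absa_def)
      have "y < x \<or> x < y" using \<open>y \<noteq> x\<close> by linarith
      then have "absa y < absa x \<or> absa x < absa y"
        using absa_strict_mono[of y x] absa_strict_mono[of x y] p by blast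
      then have "absa y ^ 4 < absa x ^ 4 \<or> absa x ^ 4 < absa y ^ 4"
        using Ap by (auto intro: power_strict_mono)
      then have "absa y ^ 4 \<noteq> absa x ^ 4" by auto
      then show False using x y by simp
    qed
  qed
  have "eta 4 = (THE x. P x)" unfolding eta_def P_def by (rule refl)
  then show ?thesis using theI'[OF uniq] Pchar by simp
qed

lemma pow71: "n \<ge> 6 \<Longrightarrow> real n * (71/100)^n \<le> 1"
proof (induction n rule: dec_induct)
  case base
  then show ?case by (simp add: power_divide)
next
  case (step n)
  have "real (Suc n) * (71/100)^(Suc n) = ((71/100) * real (Suc n)) * (71/100)^n" by simp
  also have "\<dots> \<le> real n * (71/100)^n" using step(1) by (intro mult_right_mono) auto
  finally show ?case using step by linarith
qed

lemma Theta_lower: assumes "0 < absa x" "absa x \<le> 1" "j \<ge> m"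
  shows "Theta j x \<ge> (1 - absa x ^ 4) * sin x - absa x ^ (m + 1)"
proof -
  have "absa x ^ (j+1) \<le> absa x ^ (m + 1)" using assms by (intro power_decreasing) auto
  moreover have "absa x ^ (j+1) * sin (real j * x) \<ge> - (absa x ^ (j+1))"
  proof -
    have "absa x ^ (j+1) * (- sin (real j * x)) \<le> absa x ^ (j+1) * 1"
      using assms by (intro mult_left_mono) auto
    then show ?thesis by simp
  qed
  ultimately show ?thesis unfolding Theta_def by linarith
qed

lemma main_ge5: assumes k: "k \<ge> 5" and x1: "pi / (real k + 1) < x" and x2: "x < pi / (real k - 1)"
  and j: "j \<ge> k" shows "Theta j x > 0"
proof -
  have k1: "real k - 1 \<ge> 4" using k by simp
  have xpos: "x > 0" using x1 by (smt (verit) divide_pos_pos of_nat_0_le_iff pi_gt_zero)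
  have "pi / (real k - 1) \<le> pi / 4" using k1 by (intro divide_left_mono) auto
  then have x4: "x \<le> pi/4" using x2 by linarith
  note AB = absa_bounds[OF less_imp_le[OF xpos] x4]
  have A1: "absa x \<le> 1" using AB by simp
  have T: "Theta j x \<ge> (1 - absa x ^ 4) * sin x - absa x ^ (k + 1)"
    by (rule Theta_lower[OF AB(1) A1 j])
  have x1': "x \<le> 1" using x4 pi_less_4 by linarith
  have "x^3 \<le> x" using xpos x1'
    by (metis less_imp_le power_decreasing_iff power_one_right zero_less_numeral one_le_numeral power_decreasing)
  then have s: "sin x \<ge> 5/6 * x" using sin_lower[of x] xpos by linarith
  have "(1 - absa x ^ 4) * sin x \<ge> 3/4 * (5/6 * x)"
    using AB s xpos by (intro mult_mono) auto
  moreover have "x > 2 / (real k + 1)"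
  proof -
    have "2 / (real k + 1) \<le> pi / (real k + 1)" using pi_ge_two by (intro divide_right_mono) auto
    then show ?thesis using x1 by linarith
  qed
  ultimately have L0: "(1 - absa x ^ 4) * sin x > 3/4 * (5/6 * (2 / (real k + 1)))" by linarith
  have "3/4 * (5/6 * (2 / (real k + 1))) = 5/4 / (real k + 1)" by (simp add: field_simps)
  with L0 have L: "(1 - absa x ^ 4) * sin x > 5/4 / (real k + 1)" by linarith
  have "absa x ^ (k+1) \<le> (71/100) ^ (k+1)" using AB by (intro power_mono) auto
  also have "\<dots> \<le> 1 / (real k + 1)"
    using pow71[of "k+1"] k by (simp add: field_simps)
  finally have R: "absa x ^ (k+1) \<le> 1 / (real k + 1)" .
  have "1 / (real k + 1) < 5/4 / (real k + 1)" by (intro divide_strict_right_mono) auto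
  then show ?thesis using T L R by linarith
qed

lemma Theta4_formula: assumes "cos x \<noteq> 0"
  shows "Theta 4 x = sin x * (1 + absa x ^ 2 - 3 * absa x ^ 4)"
proof -
  define A where "A = absa x"
  define c where "c = cos x"
  define s where "s = sin x"
  have h: "2 * A * c = 1" using assms by (simp add: A_def c_def absa_def)
  have s4: "sin (4 * x) = 4 * s * c * (2 * c^2 - 1)"
  proof -
    have "sin (4 * x) = sin (2 * (2 * x))" by simp
    also have "\<dots> = 2 * sin (2 * x) * cos (2 * x)" by (rule sin_double)
    also have "\<dots> = 2 * (2 * s * c) * (c^2 - s^2)" by (simp add: sin_double cos_double s_def c_def)
    also have "\<dots> = 4 * s * c * (2 * c^2 - 1)" using sin_cos_squared_add[of x] unfolding s_def c_def by algebra
    finally show ?thesis .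
  qed
  have "Theta 4 x = (1 - A^4) * s + A^5 * (4 * s * c * (2 * c^2 - 1))"
    by (simp add: Theta_def A_def s_def s4)
  also have "\<dots> = s * (1 + A^2 - 3 * A^4)" using h by algebra
  finally show ?thesis by (simp add: A_def s_def)
qed

lemma main_4: assumes x1: "pi / 5 < x" and x2: "x < pi / 3" and A4: "absa x ^ 4 < 1/2"
  and j: "j \<ge> 4" shows "Theta j x > 0"
proof -
  have xpos: "x > 0" using x1 pi_gt_zero by (smt (verit) divide_pos_pos)
  have c0: "cos x > 0" using x2 xpos by (intro cos_gt_zero_pi) auto
  have "cos x > cos (pi/3)" using xpos x2 by (intro cos_monotone_0_pi) auto
  then have c1: "cos x > 1/2" by (simp add: cos_60)
  define A where "A = absa x"
  have A0: "A > 0" using c0 by (simp add: A_def absa_def)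
  have A1: "A < 1" using c1 by (simp add: A_def absa_def)
  have s0: "sin x > 0" using xpos x2 by (intro sin_gt_zero) auto
  define t where "t = A^2"
  have t0: "t > 0" using A0 by (simp add: t_def)
  have t2: "t^2 < 1/2" using A4 by (simp add: t_def A_def flip: power_mult)
  have h: "2 * A * cos x = 1" using c0 by (simp add: A_def absa_def)
  show ?thesis
  proof (cases "j = 4")
    case True
    have "1 + t - 3 * t^2 > 0"
    proof (cases "t \<le> 1/2")
      case True
      then have "t^2 \<le> (1/2)^2" using t0 by (intro power_mono) auto
      then show ?thesis using t0 by (simp add: power2_eq_square)
    next
      case False
      then show ?thesis using t2 by linarith
    qed
    then have "1 + A^2 - 3 * A^4 > 0" by (simp add: t_def flip: power_mult)
    then show ?thesis using Theta4_formula[of x] c0 s0 True by (simp add: A_def)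
  next
    case False
    then have j5: "j \<ge> 5" using j by simp
    have T: "Theta j x \<ge> (1 - A ^ 4) * sin x - A ^ 6"
      using Theta_lower[of x 5 j] A0 A1 j5 by (simp add: A_def)
    have A6: "A^6 = t^3" by (simp add: t_def flip: power_mult)
    have A4t: "A^4 = t^2" by (simp add: t_def flip: power_mult)
    show ?thesis
    proof (cases "t \<le> 6/10")
      case True
      have "t^3 \<le> (6/10)^3" using True t0 by (intro power_mono) auto
      then have R: "A^6 \<le> 216/1000" by (simp add: A6 power3_eq_cube)
      have "t^2 \<le> (6/10)^2" using True t0 by (intro power_mono) auto
      then have L1: "1 - A^4 \<ge> 64/100" by (simp add: A4t power2_eq_square)
      have "3/5 \<le> x" using x1 pi_gt3 by linarith
      then have "sin (3/5) \<le> sin x" using x2 pi_gt3 by (intro sin_monotone_2pi_le) auto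
      moreover have "sin (3/5::real) \<ge> 3/5 - (3/5)^3/6" by (rule sin_lower) simp
      ultimately have sx: "sin x \<ge> 1/2" by (simp add: power3_eq_cube)
      have "(1 - A^4) * sin x \<ge> 64/100 * (1/2)" using L1 sx by (intro mult_mono) auto
      then show ?thesis using T R by linarith
    next
      case False
      have "4 * t * cos x ^ 2 = 1" unfolding t_def using h by algebra
      then have cx2: "cos x ^ 2 = 1 / (4 * t)" using t0 by (simp add: field_simps)
      have "1 / (4 * t) \<le> 1 / (4 * (6/10))" using False by (intro divide_left_mono) auto
      then have "sin x ^ 2 \<ge> 7/12" using sin_cos_squared_add[of x] cx2 by simp
      moreover have "(76/100::real)^2 < 7/12" by (simp add: power2_eq_square)
      ultimately have "(76/100)^2 < sin x ^ 2" by linarith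
      then have sx: "sin x > 76/100" using s0 by (smt (verit) power_mono)
      have L1: "1 - A^4 > 1/2" using A4 by (simp add: A_def)
      have "(1 - A^4) * sin x \<ge> 1/2 * (76/100)" using L1 sx by (intro mult_mono) auto
      moreover have "t < 7072/10000"
      proof (rule ccontr)
        assume "\<not> ?thesis"
        then have "(7072/10000)^2 \<le> t^2" by (intro power_mono) auto
        then show False using t2 by (simp add: power2_eq_square)
      qed
      then have "t^3 < 3536/10000"
      proof -
        have "t^3 = t * t^2" by (simp add: power3_eq_cube power2_eq_square)
        also have "\<dots> < (7072/10000) * (1/2)" using \<open>t < 7072/10000\<close> t2 t0 by (intro mult_strict_mono) auto
        finally show ?thesis by simp
      qed
      ultimately show ?thesis using T A6 by linarith
    qed
  qed
qed

theorem lemma4p3: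
  fixes k j :: nat and \<eta> :: real
  assumes "k \<ge> 4" and "eta (k + 1) \<le> \<eta>" and "\<eta> < eta k" and "j \<ge> k"
  shows "Theta j \<eta> > 0"
proof (cases "k = 4")
  case True
  have e5: "pi / 5 < eta 5" using eta_ge5[of 5] by simp
  note e4 = eta4
  have x1: "pi / 5 < \<eta>" using e5 assms(2) True by simp
  have x2: "\<eta> < eta 4" using assms(3) True by simp
  have x0: "0 \<le> \<eta>" using x1 pi_gt_zero by (smt (verit) divide_pos_pos)
  have "absa \<eta> < absa (eta 4)" using x0 x2 e4 pi_gt_zero by (intro absa_strict_mono) auto
  moreover have "cos \<eta> > 0" using x0 x2 e4 pi_gt_zero by (intro cos_gt_zero_pi) auto
  then have "absa \<eta> > 0" by (simp add: absa_def)
  ultimately have "absa \<eta> ^ 4 < absa (eta 4) ^ 4" by (intro power_strict_mono) auto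
  then have "absa \<eta> ^ 4 < 1/2" using e4 by simp
  then show ?thesis using main_4[OF x1, of j] x2 e4 assms(4) True by simp
next
  case False
  then have k5: "k \<ge> 5" using assms(1) by simp
  have "pi / real (k + 1) < eta (k + 1)" using eta_ge5[of "k+1"] k5 by simp
  then have x1: "pi / (real k + 1) < \<eta>" using assms(2) by (simp add: add.commute)
  have x2: "\<eta> < pi / (real k - 1)" using eta_ge5[OF k5] assms(3) by simp
  show ?thesis by (rule main_ge5[OF k5 x1 x2 assms(4)])
qed
end
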